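(* Let $A$ and $B$ be commutative associative unital algebras over $\mathbb{C}$ or $\mathbb{R}$, and assume $B$ is connected in the sense that for every $k\ge0$ and $b\in B$, $b(b-1)(b-2)\cdots(b-k)=0$ implies $b=j$ for some $j\in\{0,1,\dots,k\}$. Let $\mathbf{f}\colon A\to B$ be a linear map such that there is $N\in\mathbb{N}$ with the property that for every $a\in A$ the characteristic function $R(\mathbf{f},a,z)$ is a polynomial in $z$ of degree at most $N$. Then $\mathbf{f}(1)=n$ for some integer $n$ with $0\le n\le N$, $R(\mathbf{f},1,z)=(1+z)^n$, and for every $a\in A$, $R(\mathbf{f},a,z)$ is a polynomial in $z$ of degree at most $n$.
   Context: For a linear map $\mathbf{f}\colon A\to B$, its characteristic function is the formal power series $R(\mathbf{f},a,z)=\exp\bigl(\mathbf{f}(\ln(1+az))\bigr)\in B[[z]]$, where $\ln(1+az)=\sum_{k\ge1}(-1)^{k-1}a^kz^k/k$ and $\mathbf{f}$ is applied coefficientwise. *)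

theory Defs
  imports "HOL-Analysis.Analysis" "HOL-Computational_Algebra.Formal_Power_Series"
begin

text \<open>Exponential of a formal power series with zero constant term, over a real algebra:
  exp g = sum over k of g^k / k!; the n-th coefficient only involves k \<le> n.\<close>
definition fps_exp_alg :: "'b::{real_algebra_1,comm_ring_1} fps \<Rightarrow> 'b fps" where
  "fps_exp_alg g = Abs_fps (\<lambda>n. \<Sum>k\<le>n. scaleR (1 / fact k) (fps_nth (g ^ k) n))"

definition fps_ln1p :: "'a::{real_algebra_1,comm_ring_1} \<Rightarrow> 'a fps" where
  "fps_ln1p a = Abs_fps (\<lambda>k. if k = 0 then 0
      else scaleR ((-1) ^ (k - 1) / real k) (a ^ k))"

definition char_fun :: "('a::{real_algebra_1,comm_ring_1} \<Rightarrow> 'b::{real_algebra_1,comm_ring_1})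
    \<Rightarrow> 'a \<Rightarrow> 'b fps" where
  "char_fun f a = fps_exp_alg (Abs_fps (\<lambda>k. f (fps_nth (fps_ln1p a) k)))"

definition connected_alg :: "'b::{real_algebra_1,comm_ring_1} itself \<Rightarrow> bool" where
  "connected_alg _ \<longleftrightarrow> (\<forall>(k::nat) (b::'b). (\<Prod>j\<le>k. b - of_nat j) = 0 \<longrightarrow> (\<exists>j\<le>k. b = of_nat j))"

end

theory Submission
  imports Defs
begin

no_notation vec_nth (infixl \<open>$\<close> 90)
unbundle fps_syntax


lemma pow_prefix0:
  fixes c :: "'x::comm_ring_1 fps"
  assumes "c $ 0 = 0" "n < k" shows "(c ^ k) $ n = 0"
  using startsby_zero_power_prefix[OF assms(1)] assms(2) by blast

lemma comp_mult_nth: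
  fixes c :: "'x::comm_ring_1 fps"
  assumes c0: "c $ 0 = 0"
  shows "((a oo c) * (b oo c)) $ n = (\<Sum>s=0..n. \<Sum>i=0..s. a$i * b$(s-i) * (c^s)$n)"
proof -
  let ?S = "{(k::nat, m::nat). k + m \<le> n}"
  have s: "?S \<subseteq> {0..n} \<times> {0..n}" by (auto simp add: subset_eq)
  have f: "finite ?S" by (auto intro: finite_subset[OF s])
  have "((a oo c) * (b oo c)) $ n = (\<Sum>i = 0..n. \<Sum>q = 0..i. \<Sum>j = 0..n - i. a $ q * (c ^ q) $ i * (b $ j * (c ^ j) $ (n - i)))"
    by (simp add: fps_mult_nth fps_compose_nth sum_product)
  also have "\<dots> = (\<Sum>i = 0..n. \<Sum>(k,m)\<in>?S. a $ k * (c ^ k) $ i * b $ m * (c ^ m) $ (n-i))"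
    apply (rule sum.cong [OF refl])
    apply (simp add: sum.cartesian_product mult.assoc)
    apply (rule sum.mono_neutral_left[OF f])
      apply force
    apply (auto simp: not_le)
     apply (rule ccontr, simp add: not_le pow_prefix0[OF c0])
    apply (rule ccontr, simp add: not_le pow_prefix0[OF c0])
    done
  also have "\<dots> = (\<Sum>(k, m) \<in> ?S. \<Sum>j = 0..n. a $ k * b $ m * ((c ^ k) $ j * (c ^ m) $ (n - j)))"
    by (subst sum.swap) (auto simp add: ac_simps intro!: sum.cong)
  also have "\<dots> = (\<Sum>(k, m) \<in> ?S. a $ k * b $ m * (c ^ (k + m)) $ n)"
    by (simp add: fps_mult_nth sum_distrib_left power_add)
  also have "\<dots> = (\<Sum>s=0..n. \<Sum>i=0..s. a$i * b$(s-i) * (c^s)$n)"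
    by (rule sum_pair_less_iff)
  finally show ?thesis .
qed

lemma comp_mult:
  fixes c :: "'x::comm_ring_1 fps"
  assumes c0: "c $ 0 = 0"
  shows "(a * b) oo c = (a oo c) * (b oo c)"
proof (rule fps_ext)
  fix n show "((a * b) oo c) $ n = ((a oo c) * (b oo c)) $ n"
    unfolding comp_mult_nth[OF c0] by (simp add: fps_compose_nth fps_mult_nth sum_distrib_right)
qed

lemma comp_power:
  fixes c :: "'x::comm_ring_1 fps"
  assumes c0: "c $ 0 = 0"
  shows "(a ^ k) oo c = (a oo c) ^ k"
  by (induct k) (simp_all add: comp_mult[OF c0])

lemma comp_deriv:
  fixes a :: "'x::comm_ring_1 fps"
  assumes b0: "b$0 = 0"
  shows "fps_deriv (a oo b) = ((fps_deriv a) oo b) * fps_deriv b"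
proof -
  have "(fps_deriv (a oo b))$n = (((fps_deriv a) oo b) * (fps_deriv b)) $n" for n
  proof -
    have "(fps_deriv (a oo b))$n = sum (\<lambda>i. a $ i * (fps_deriv (b^i))$n) {0.. Suc n}"
      by (simp add: fps_compose_def algebra_simps sum_distrib_left del: of_nat_Suc)
    also have "\<dots> = sum (\<lambda>i. a$i * ((fps_const (of_nat i)) * (fps_deriv b * (b^(i - 1))))$n) {0.. Suc n}"
      by (simp add: algebra_simps fps_deriv_power del: fps_mult_left_const_nth of_nat_Suc)
    also have "\<dots> = sum (\<lambda>i. of_nat i * a$i * (((b^(i - 1)) * fps_deriv b))$n) {0.. Suc n}"
      unfolding fps_mult_left_const_nth  by (simp add: algebra_simps)
    also have "\<dots> = sum (\<lambda>i. of_nat i * a$i * (sum (\<lambda>j. (b^ (i - 1))$j * (fps_deriv b)$(n - j)) {0..n})) {0.. Suc n}"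
      unfolding fps_mult_nth ..
    also have "\<dots> = sum (\<lambda>i. of_nat i * a$i * (sum (\<lambda>j. (b^ (i - 1))$j * (fps_deriv b)$(n - j)) {0..n})) {1.. Suc n}"
      by (intro sum.mono_neutral_right) (auto simp add: not_le)
    also have "\<dots> = sum (\<lambda>i. of_nat (i + 1) * a$(i+1) * (sum (\<lambda>j. (b^ i)$j * of_nat (n - j + 1) * b$(n - j + 1)) {0..n})) {0.. n}"
      unfolding fps_deriv_nth
      by (rule sum.reindex_cong [of Suc]) (simp_all add: mult.assoc)
    finally have th0: "(fps_deriv (a oo b))$n =
      sum (\<lambda>i. of_nat (i + 1) * a$(i+1) * (sum (\<lambda>j. (b^ i)$j * of_nat (n - j + 1) * b$(n - j + 1)) {0..n})) {0.. n}" .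
    have "(((fps_deriv a) oo b) * (fps_deriv b))$n = sum (\<lambda>i. (fps_deriv b)$ (n - i) * ((fps_deriv a) oo b)$i) {0..n}"
      unfolding fps_mult_nth by (simp add: ac_simps)
    also have "\<dots> = sum (\<lambda>i. sum (\<lambda>j. of_nat (n - i +1) * b$(n - i + 1) * of_nat (j + 1) * a$(j+1) * (b^j)$i) {0..n}) {0..n}"
      unfolding fps_deriv_nth fps_compose_nth sum_distrib_left mult.assoc
      by (auto simp: subset_eq b0 startsby_zero_power_prefix sum.mono_neutral_left intro: sum.cong)
    also have "\<dots> = sum (\<lambda>i. of_nat (i + 1) * a$(i+1) * (sum (\<lambda>j. (b^ i)$j * of_nat (n - j + 1) * b$(n - j + 1)) {0..n})) {0.. n}"
      unfolding sum_distrib_left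
      by (subst sum.swap) (force intro: sum.cong simp: ac_simps)
    finally show ?thesis
      unfolding th0 by simp
  qed
  then show ?thesis by (simp add: fps_eq_iff)
qed

definition uu :: "'x::comm_ring_1 fps" where "uu = Abs_fps (\<lambda>k. (-1)^k)"
definition WW :: "'x::comm_ring_1 fps" where "WW = fps_X * uu"

lemma uu_inv: "(1 + fps_X) * (uu :: 'x::comm_ring_1 fps) = 1"
proof (rule fps_ext)
  fix k show "((1 + fps_X) * (uu :: 'x fps)) $ k = (1::'x fps) $ k"
    by (cases k) (simp_all add: uu_def distrib_right fps_X_mult_nth)
qed

lemma uu_0 [simp]: "(uu :: 'x::comm_ring_1 fps) $ 0 = 1" by (simp add: uu_def)
lemma WW_0 [simp]: "(WW :: 'x::comm_ring_1 fps) $ 0 = 0" by (simp add: WW_def)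

lemma uu_deriv: "fps_deriv (uu :: 'x::comm_ring_1 fps) = - (uu ^ 2)"
proof -
  have "fps_deriv ((1 + fps_X) * (uu :: 'x fps)) = 0" by (simp add: uu_inv)
  hence "uu + (1 + fps_X) * fps_deriv (uu :: 'x fps) = 0" by (simp add: algebra_simps)
  hence "uu * (uu + (1 + fps_X) * fps_deriv (uu :: 'x fps)) = 0" by simp
  hence "(uu ^ 2) + ((1 + fps_X) * uu) * fps_deriv (uu :: 'x fps) = 0"
    by (simp add: algebra_simps power2_eq_square)
  hence "(uu ^ 2) + 1 * fps_deriv (uu :: 'x fps) = 0" by (simp only: uu_inv)
  thus ?thesis by (simp add: eq_neg_iff_add_eq_0 add.commute)
qed

lemma WW_deriv: "fps_deriv (WW :: 'x::comm_ring_1 fps) = (uu ^ 2)"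
proof -
  have "fps_deriv (WW :: 'x fps) = uu + fps_X * fps_deriv uu" by (simp add: WW_def)
  also have "\<dots> = uu * ((1 + fps_X) * uu) - fps_X * (uu ^ 2)" by (simp add: uu_inv uu_deriv)
  also have "\<dots> = (uu ^ 2)" by (simp add: algebra_simps power2_eq_square)
  finally show ?thesis .
qed

lemma ofnat_cancel:
  fixes x :: "'b::{real_algebra_1,comm_ring_1}"
  assumes "of_nat m * x = 0" "m \<noteq> 0" shows "x = 0"
proof -
  have "of_nat m * x = real m *\<^sub>R x" by (simp add: scaleR_conv_of_real)
  with assms show ?thesis by simp
qed

lemma lin_cancel_fps:
  fixes D :: "'x::comm_ring_1 fps"
  assumes "(1 + fps_const a * fps_X) * D = 0" shows "D = 0"
proof -
  have e: "D $ k + (if k = 0 then 0 else a * D $ (k - 1)) = 0" for k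
  proof -
    have "((1 + fps_const a * fps_X) * D) $ k = 0" using assms by simp
    thus ?thesis by (cases k) (simp_all add: distrib_right mult.assoc fps_X_mult_nth)
  qed
  have "D $ k = 0" for k
  proof (induct k)
    case 0 then show ?case using e[of 0] by simp
  next
    case (Suc k) then show ?case using e[of "Suc k"] by simp
  qed
  thus ?thesis by (simp add: fps_ext)
qed

lemma deriv_zero_fps:
  fixes D :: "'b::{real_algebra_1,comm_ring_1} fps"
  assumes "fps_deriv D = 0" "D $ 0 = 0" shows "D = 0"
proof (rule fps_ext)
  fix k show "D $ k = 0 $ k"
  proof (cases k)
    case 0 then show ?thesis using assms by simp
  next
    case (Suc m)
    have "of_nat (m + 1) * D $ (m + 1) = 0" using arg_cong[OF assms(1), of "\<lambda>F. F $ m"] by simp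
    hence "D $ (m+1) = 0" by (rule ofnat_cancel) simp
    then show ?thesis using Suc by simp
  qed
qed

lemma ln_deriv_nth:
  "fps_deriv (fps_ln1p (a::'a::{real_algebra_1,comm_ring_1})) $ k = (-1)^k * a^(k+1)"
proof -
  have "fps_deriv (fps_ln1p a) $ k = of_nat (k+1) * (((-1)^k / real (k+1)) *\<^sub>R a^(k+1))"
    by (simp add: fps_ln1p_def)
  also have "\<dots> = of_real (real (k+1)) * (of_real ((-1)^k / real (k+1)) * a^(k+1))"
    by (simp add: scaleR_conv_of_real del: of_nat_Suc)
  also have "\<dots> = of_real (real (k+1) * ((-1)^k / real (k+1))) * a^(k+1)"
    by (simp only: of_real_mult mult.assoc)
  also have "real (k+1) * ((-1)^k / real (k+1)) = (-1)^k" by simp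
  also have "of_real ((-1)^k) * a^(k+1) = (-1)^k * a^(k+1)" by simp
  finally show ?thesis .
qed

lemma ln_ode:
  "(1 + fps_const a * fps_X) * fps_deriv (fps_ln1p (a::'a::{real_algebra_1,comm_ring_1})) = fps_const a"
proof (rule fps_ext)
  fix k show "((1 + fps_const a * fps_X) * fps_deriv (fps_ln1p a)) $ k = fps_const a $ k"
    by (cases k) (simp_all add: distrib_right mult.assoc fps_X_mult_nth ln_deriv_nth del: fps_deriv_nth)
qed



definition fmap :: "('a \<Rightarrow> 'b) \<Rightarrow> 'a fps \<Rightarrow> 'b fps" where
  "fmap f F = Abs_fps (\<lambda>k. f (F $ k))"

lemma fmap_nth [simp]: "fmap f F $ k = f (F $ k)" by (simp add: fmap_def)

lemma lin_ofint:
  fixes f :: "'a::{real_algebra_1,comm_ring_1} \<Rightarrow> 'b::{real_algebra_1,comm_ring_1}"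
  assumes lin: "linear f"
  shows "f (x * of_int m) = f x * of_int m"
proof -
  have "x * of_int m = real_of_int m *\<^sub>R x" by (simp add: scaleR_conv_of_real mult.commute)
  moreover have "f x * of_int m = real_of_int m *\<^sub>R f x" by (simp add: scaleR_conv_of_real mult.commute)
  ultimately show ?thesis using linear_cmul[OF lin] by simp
qed

lemma lin_ofnat:
  fixes f :: "'a::{real_algebra_1,comm_ring_1} \<Rightarrow> 'b::{real_algebra_1,comm_ring_1}"
  assumes lin: "linear f"
  shows "f (of_nat m * x) = of_nat m * f x"
  using lin_ofint[OF lin, of x "int m"] by (simp add: mult.commute)

lemma fmap_add:
  fixes f :: "'a::{real_algebra_1,comm_ring_1} \<Rightarrow> 'b::{real_algebra_1,comm_ring_1}"
  assumes lin: "linear f"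
  shows "fmap f (F + G) = fmap f F + fmap f G"
  by (rule fps_ext) (simp add: real_vector.linear_add[OF lin])

lemma fmap_deriv:
  fixes f :: "'a::{real_algebra_1,comm_ring_1} \<Rightarrow> 'b::{real_algebra_1,comm_ring_1}"
  assumes lin: "linear f"
  shows "fmap f (fps_deriv F) = fps_deriv (fmap f F)"
  by (rule fps_ext) (simp add: lin_ofnat[OF lin] del: of_nat_Suc)

definition ih :: "int fps \<Rightarrow> 'x::comm_ring_1 fps" where
  "ih F = Abs_fps (\<lambda>k. of_int (F $ k))"

lemma ih_mult: "ih (F * G) = (ih F * ih G :: 'x::comm_ring_1 fps)"
  by (rule fps_ext) (simp add: ih_def fps_mult_nth)

lemma ih_power: "ih (F ^ n) = (ih F ^ n :: 'x::comm_ring_1 fps)"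
proof (induct n)
  case 0 show ?case by (rule fps_ext) (simp add: ih_def)
next
  case (Suc n) then show ?case by (simp add: ih_mult)
qed

lemma WW_ih: "(WW :: 'x::comm_ring_1 fps) = ih WW"
proof (rule fps_ext)
  fix k show "(WW :: 'x fps) $ k = ih WW $ k"
    by (cases k) (simp_all add: ih_def WW_def uu_def fps_X_mult_nth)
qed

lemma WW_pow_nth: "((WW :: 'x::comm_ring_1 fps) ^ i) $ n = of_int (((WW :: int fps) ^ i) $ n)"
proof -
  have "((WW :: 'x::comm_ring_1 fps) ^ i) = ih (WW ^ i)" by (simp add: ih_power WW_ih[symmetric])
  thus ?thesis by (simp add: ih_def)
qed

lemma fmap_comp:
  fixes f :: "'a::{real_algebra_1,comm_ring_1} \<Rightarrow> 'b::{real_algebra_1,comm_ring_1}"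
  assumes lin: "linear f"
  shows "fmap f (F oo WW) = fmap f F oo WW"
proof (rule fps_ext)
  fix n
  have "fmap f (F oo WW) $ n = f (\<Sum>i=0..n. F $ i * of_int (((WW :: int fps) ^ i) $ n))"
    by (simp add: fps_compose_nth WW_pow_nth[where 'x='a])
  also have "\<dots> = (\<Sum>i=0..n. f (F $ i) * of_int (((WW :: int fps) ^ i) $ n))"
    by (simp add: real_vector.linear_sum[OF lin] lin_ofint[OF lin])
  also have "\<dots> = (fmap f F oo WW) $ n"
    by (simp add: fps_compose_nth WW_pow_nth[where 'x='b])
  finally show "fmap f (F oo WW) $ n = (fmap f F oo WW) $ n" .
qed

lemma fmap_ln1:
  fixes f :: "'a::{real_algebra_1,comm_ring_1} \<Rightarrow> 'b::{real_algebra_1,comm_ring_1}"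
  assumes lin: "linear f"
  shows "fmap f (fps_ln1p 1) = fps_const (f 1) * fps_ln1p 1"
proof (rule fps_ext)
  fix k
  show "fmap f (fps_ln1p 1) $ k = (fps_const (f 1) * fps_ln1p 1) $ k"
  proof (cases "k = 0")
    case True then show ?thesis by (simp add: fps_ln1p_def real_vector.linear_0[OF lin])
  next
    case False
    then show ?thesis by (simp add: fps_ln1p_def linear_cmul[OF lin])
  qed
qed

lemma fmap_ln_0:
  fixes f :: "'a::{real_algebra_1,comm_ring_1} \<Rightarrow> 'b::{real_algebra_1,comm_ring_1}"
  assumes lin: "linear f"
  shows "fmap f (fps_ln1p a) $ 0 = 0"
  by (simp add: fps_ln1p_def real_vector.linear_0[OF lin])

definition TT :: "nat \<Rightarrow> 'b::{real_algebra_1,comm_ring_1} fps \<Rightarrow> 'b fps" where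
  "TT M G = (\<Sum>k\<le>M. fps_const (of_real (1 / fact k)) * G ^ k)"

lemma exp_TT:
  fixes G :: "'b::{real_algebra_1,comm_ring_1} fps"
  assumes G0: "G $ 0 = 0" and nM: "n \<le> M"
  shows "fps_exp_alg G $ n = TT M G $ n"
proof -
  have "TT M G $ n = (\<Sum>k\<le>M. of_real (1 / fact k) * (G ^ k) $ n)"
    by (simp add: TT_def fps_sum_nth)
  also have "\<dots> = (\<Sum>k\<le>n. of_real (1 / fact k) * (G ^ k) $ n)"
    by (rule sum.mono_neutral_right) (use nM pow_prefix0[OF G0] in auto)
  also have "\<dots> = fps_exp_alg G $ n"
    by (simp add: fps_exp_alg_def scaleR_conv_of_real)
  finally show ?thesis by simp
qed

lemma TT_deriv:
  fixes G :: "'b::{real_algebra_1,comm_ring_1} fps"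
  shows "fps_deriv (TT (Suc M) G) = fps_deriv G * TT M G"
proof -
  have c: "of_real (1 / fact (Suc k)) * of_nat (Suc k) = (of_real (1 / fact k) :: 'b)" for k
  proof -
    have r: "1 / fact (Suc k) * real (Suc k) = (1 / fact k :: real)"
      by (simp add: fact_Suc field_simps del: of_nat_Suc)
    have "of_real (1 / fact (Suc k)) * of_nat (Suc k) = (of_real (1 / fact (Suc k) * real (Suc k)) :: 'b)"
      by (simp only: of_real_mult of_real_of_nat_eq)
    thus ?thesis by (simp only: r)
  qed
  have "fps_deriv (TT (Suc M) G) = (\<Sum>k\<le>Suc M. fps_const (of_real (1 / fact k)) * (of_nat k * fps_deriv G * G ^ (k - 1)))"
    by (simp only: TT_def fps_deriv_sum fps_deriv_mult_const_left fps_deriv_power')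
  also have "\<dots> = (\<Sum>k\<le>M. fps_const (of_real (1 / fact (Suc k))) * (of_nat (Suc k) * fps_deriv G * G ^ k))"
    by (subst sum.atMost_Suc_shift) simp
  also have "\<dots> = (\<Sum>k\<le>M. fps_deriv G * (fps_const (of_real (1 / fact (Suc k)) * of_nat (Suc k)) * G ^ k))"
    by (rule sum.cong) (simp_all add: fps_const_mult[symmetric] fps_of_nat ac_simps del: of_nat_Suc)
  also have "\<dots> = fps_deriv G * TT M G"
    by (simp only: c) (simp add: TT_def sum_distrib_left)
  finally show ?thesis .
qed

lemma exp_deriv:
  fixes G :: "'b::{real_algebra_1,comm_ring_1} fps"
  assumes G0: "G $ 0 = 0"
  shows "fps_deriv (fps_exp_alg G) = fps_deriv G * fps_exp_alg G"
proof (rule fps_ext)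
  fix n
  have "fps_deriv (fps_exp_alg G) $ n = of_nat (n+1) * fps_exp_alg G $ (n+1)" by simp
  also have "\<dots> = of_nat (n+1) * TT (Suc n) G $ (n+1)" using exp_TT[OF G0, of "n+1" "Suc n"] by simp
  also have "\<dots> = fps_deriv (TT (Suc n) G) $ n" by simp
  also have "\<dots> = (fps_deriv G * TT n G) $ n" by (simp only: TT_deriv)
  also have "\<dots> = (\<Sum>i=0..n. fps_deriv G $ i * TT n G $ (n - i))" by (rule fps_mult_nth)
  also have "\<dots> = (\<Sum>i=0..n. fps_deriv G $ i * fps_exp_alg G $ (n - i))"
  proof (rule sum.cong)
    fix i assume "i \<in> {0..n}"
    then show "fps_deriv G $ i * TT n G $ (n - i) = fps_deriv G $ i * fps_exp_alg G $ (n - i)"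
      using exp_TT[OF G0, of "n - i" n] by simp
  qed simp
  also have "\<dots> = (fps_deriv G * fps_exp_alg G) $ n" by (simp add: fps_mult_nth)
  finally show "fps_deriv (fps_exp_alg G) $ n = (fps_deriv G * fps_exp_alg G) $ n" .
qed

lemma exp_0 [simp]: "fps_exp_alg (G :: 'b::{real_algebra_1,comm_ring_1} fps) $ 0 = 1"
  by (simp add: fps_exp_alg_def)

lemma ode_unique:
  fixes F H P :: "'b::{real_algebra_1,comm_ring_1} fps"
  assumes F: "fps_deriv F = P * F" and H: "fps_deriv H = P * H" and F0: "F $ 0 = H $ 0"
  shows "F = H"
proof -
  have "F $ k = H $ k" for k
  proof (induct k rule: less_induct)
    case (less k)
    show ?case
    proof (cases k)
      case 0 then show ?thesis using F0 by simp
    next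
      case (Suc m)
      have "of_nat (m+1) * F $ (m+1) = (P * F) $ m" using arg_cong[OF F, of "\<lambda>X. X $ m"] by simp
      also have "\<dots> = (P * H) $ m" unfolding fps_mult_nth
        by (rule sum.cong) (use less Suc in auto)
      also have "\<dots> = of_nat (m+1) * H $ (m+1)" using arg_cong[OF H, of "\<lambda>X. X $ m"] by simp
      finally have "of_nat (m+1) * (F $ (m+1) - H $ (m+1)) = 0" by (simp add: algebra_simps)
      hence "F $ (m+1) - H $ (m+1) = 0" by (rule ofnat_cancel) simp
      then show ?thesis using Suc by simp
    qed
  qed
  thus ?thesis by (simp add: fps_ext)
qed



lemma ln1_deriv: "fps_deriv (fps_ln1p (1::'a::{real_algebra_1,comm_ring_1})) = uu"
proof -
  have "(1 + fps_X) * fps_deriv (fps_ln1p (1::'a)) = 1" using ln_ode[of "1::'a"] by simp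
  hence "uu * ((1 + fps_X) * fps_deriv (fps_ln1p (1::'a))) = uu" by simp
  hence "((1 + fps_X) * uu) * fps_deriv (fps_ln1p (1::'a)) = uu" by (simp only: ac_simps)
  thus ?thesis by (simp add: uu_inv)
qed

lemma ln_shift:
  fixes a :: "'a::{real_algebra_1,comm_ring_1}"
  shows "fps_ln1p a = fps_ln1p 1 + (fps_ln1p (a - 1) oo WW)"
proof -
  define c where "c = a - 1"
  define La where "La = fps_ln1p a"
  define L1 where "L1 = fps_ln1p (1::'a)"
  define Lc where "Lc = fps_ln1p c"
  have Kac: "fps_const a = fps_const c + 1" by (simp add: c_def fps_const_add[symmetric])
  have dc: "(1 + fps_const c * fps_X) * fps_deriv Lc = fps_const c" unfolding Lc_def by (rule ln_ode)
  have "((1 + fps_const c * fps_X) * fps_deriv Lc) oo WW = (1 + fps_const c * WW) * (fps_deriv Lc oo WW)"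
    by (simp add: comp_mult fps_compose_add_distrib)
  hence comp: "(1 + fps_const c * WW) * (fps_deriv Lc oo WW) = fps_const c" using dc by simp
  have dcomp: "fps_deriv (Lc oo WW) = (fps_deriv Lc oo WW) * uu^2"
    by (simp add: comp_deriv WW_deriv)
  have ka: "1 + fps_const a * fps_X = (1 + fps_X) * (1 + fps_const c * WW)"
  proof -
    have "(1 + fps_X) * (1 + fps_const c * WW) = 1 + fps_X + fps_const c * fps_X * ((1 + fps_X) * uu)"
      by (simp add: WW_def algebra_simps)
    also have "\<dots> = 1 + fps_const a * fps_X" by (simp only: uu_inv mult_1_right) (simp add: Kac algebra_simps)
    finally show ?thesis by simp
  qed
  have e1: "(1 + fps_const a * fps_X) * fps_deriv La = fps_const a" unfolding La_def by (rule ln_ode)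
  have e2: "(1 + fps_const a * fps_X) * uu = 1 + fps_const c * WW"
  proof -
    have "(1 + fps_const a * fps_X) * uu = ((1 + fps_X) * uu) * (1 + fps_const c * WW)"
      unfolding ka by (metis mult.commute mult.assoc)
    thus ?thesis by (simp add: uu_inv)
  qed
  have e3: "(1 + fps_const a * fps_X) * ((fps_deriv Lc oo WW) * uu^2) = fps_const c * uu"
  proof -
    have "(1 + fps_const a * fps_X) * ((fps_deriv Lc oo WW) * uu^2)
        = ((1 + fps_X) * uu) * ((1 + fps_const c * WW) * (fps_deriv Lc oo WW)) * uu"
      unfolding ka power2_eq_square by (simp only: mult_ac)
    thus ?thesis by (simp add: uu_inv comp)
  qed
  have e4: "fps_const c * WW + fps_const c * uu = fps_const c"
  proof -
    have "fps_const c * WW + fps_const c * uu = fps_const c * ((1 + fps_X) * uu)"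
      by (simp add: WW_def algebra_simps)
    thus ?thesis by (simp add: uu_inv)
  qed
  define D where "D = La - L1 - (Lc oo WW)"
  have "(1 + fps_const a * fps_X) * fps_deriv D
      = (1 + fps_const a * fps_X) * fps_deriv La - (1 + fps_const a * fps_X) * uu
        - (1 + fps_const a * fps_X) * ((fps_deriv Lc oo WW) * uu^2)"
  proof -
    have "fps_deriv D = fps_deriv La - uu - (fps_deriv Lc oo WW) * uu^2"
      by (simp add: D_def L1_def ln1_deriv dcomp)
    thus ?thesis by (simp only: right_diff_distrib)
  qed
  also have "\<dots> = 0"
  proof -
    have h: "fps_const c + 1 - (1 + fps_const c * WW) - fps_const c * uu
        = fps_const c - (fps_const c * WW + fps_const c * uu)" by (simp add: algebra_simps)
    show ?thesis unfolding e1 e2 e3 by (subst Kac, subst h, simp only: e4 diff_self)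
  qed
  finally have "fps_deriv D = 0" by (rule lin_cancel_fps)
  moreover have "D $ 0 = 0" by (simp add: D_def La_def L1_def Lc_def fps_ln1p_def)
  ultimately have "D = 0" by (rule deriv_zero_fps)
  hence "La = L1 + (Lc oo WW)" unfolding D_def by (simp add: diff_diff_eq)
  thus ?thesis unfolding La_def L1_def Lc_def c_def .
qed

lemma binom_nth: "(((1 + fps_X) ^ m) :: 'x::comm_ring_1 fps) $ i = of_nat (m choose i)"
proof (induct m arbitrary: i)
  case 0 then show ?case by (cases i) simp_all
next
  case (Suc m)
  have "(((1 + fps_X) ^ Suc m) :: 'x fps) $ i = ((1 + fps_X) ^ m :: 'x fps) $ i
        + (if i = 0 then 0 else ((1 + fps_X) ^ m :: 'x fps) $ (i - 1))"
    by (simp add: distrib_right fps_X_mult_nth)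
  then show ?case using Suc by (cases i) simp_all
qed



theorem mainTheorem2:
  fixes f :: "'a::{real_algebra_1,comm_ring_1} \<Rightarrow> 'b::{real_algebra_1,comm_ring_1}"
    and N :: nat
  assumes conn: "connected_alg TYPE('b)"
    and lin: "linear f"
    and poly: "\<forall>a. \<forall>k>N. fps_nth (char_fun f a) k = 0"
  shows "\<exists>n::nat. n \<le> N \<and> f 1 = of_nat n \<and> char_fun f 1 = (1 + fps_X) ^ n
           \<and> (\<forall>a. \<forall>k>n. fps_nth (char_fun f a) k = 0)"
proof -
  define G where "G x = fmap f (fps_ln1p x)" for x
  have Edef: "char_fun f x = fps_exp_alg (G x)" for x
    by (simp add: char_fun_def G_def fmap_def)
  have G0: "G x $ 0 = 0" for x unfolding G_def by (rule fmap_ln_0[OF lin])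
  have Ed: "fps_deriv (char_fun f x) = fps_deriv (G x) * char_fun f x" for x
    unfolding Edef by (rule exp_deriv[OF G0])
  have E0: "char_fun f x $ 0 = 1" for x unfolding Edef by simp
  define c where "c = f 1"
  have G1d: "fps_deriv (G 1) = fps_const c * uu"
    by (simp add: G_def fmap_ln1[OF lin] ln1_deriv c_def)
  define E1 where "E1 = char_fun f 1"
  have E1d: "fps_deriv E1 = (fps_const c * uu) * E1" unfolding E1_def Ed G1d ..
  have ode1: "(1 + fps_X) * fps_deriv E1 = fps_const c * E1"
  proof -
    have "(1 + fps_X) * fps_deriv E1 = fps_const c * ((1 + fps_X) * uu) * E1"
      unfolding E1d by (simp only: ac_simps)
    thus ?thesis by (simp add: uu_inv)
  qed
  have rec: "of_nat (k+1) * E1 $ (k+1) = (c - of_nat k) * E1 $ k" for k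
  proof -
    have "((1 + fps_X) * fps_deriv E1) $ k = (fps_const c * E1) $ k" using ode1 by simp
    hence "of_nat (k+1) * E1 $ (k+1) + of_nat k * E1 $ k = c * E1 $ k"
      by (cases k) (simp_all add: distrib_right fps_X_mult_nth del: of_nat_Suc)
    thus ?thesis by (simp add: algebra_simps)
  qed
  have prodf: "of_nat (fact k) * E1 $ k = (\<Prod>j<k. c - of_nat j)" for k
  proof (induct k)
    case 0 then show ?case by (simp add: E1_def E0)
  next
    case (Suc k)
    have fs: "fact (Suc k) = Suc k * fact k" by simp
    have "of_nat (fact (Suc k)) * E1 $ (Suc k) = of_nat (fact k) * (of_nat (Suc k) * E1 $ (Suc k))"
      by (simp only: fs of_nat_mult mult_ac)
    also have "of_nat (Suc k) * E1 $ Suc k = (c - of_nat k) * E1 $ k" using rec[of k] by simp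
    also have "of_nat (fact k) * ((c - of_nat k) * E1 $ k) = (c - of_nat k) * (of_nat (fact k) * E1 $ k)"
      by (simp only: mult_ac)
    also have "\<dots> = (\<Prod>j<Suc k. c - of_nat j)" using Suc by (simp add: ac_simps)
    finally show ?case .
  qed
  have "(\<Prod>j\<le>N. c - of_nat j) = 0"
  proof -
    have "E1 $ (Suc N) = 0" using poly E1_def by simp
    hence "(\<Prod>j<Suc N. c - of_nat j) = 0" using prodf[of "Suc N"] by simp
    thus ?thesis by (simp add: lessThan_Suc_atMost)
  qed
  then obtain n where nN: "n \<le> N" and cn: "c = of_nat n"
    using conn unfolding connected_alg_def by blast
  have pwd: "fps_deriv ((1 + fps_X) ^ n) = (fps_const c * uu) * (1 + fps_X) ^ n"
  proof (cases n)
    case 0 then show ?thesis by (simp add: cn)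
  next
    case (Suc m)
    have "(fps_const c * uu) * (1 + fps_X) ^ n = fps_const c * ((1 + fps_X) * uu) * (1 + fps_X) ^ m"
      by (simp add: Suc ac_simps)
    also have "\<dots> = fps_const c * (1 + fps_X) ^ m" by (simp add: uu_inv)
    also have "\<dots> = fps_deriv ((1 + fps_X) ^ n)"
    proof -
      have d: "fps_deriv ((1 + fps_X) ^ n :: 'b fps) = fps_const (of_nat n) * fps_deriv (1 + fps_X) * (1 + fps_X) ^ (n - 1)"
        by (rule fps_deriv_power)
      show ?thesis unfolding d by (simp add: Suc cn)
    qed
    finally show ?thesis by simp
  qed
  have E1eq: "E1 = (1 + fps_X) ^ n"
    by (rule ode_unique[OF E1d pwd]) (simp add: E1_def E0 fps_power_zeroth)
  have part3: "char_fun f a $ k = 0" if kn: "k > n" for a k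
  proof -
    define ca where "ca = a - 1"
    define Ea where "Ea = char_fun f a"
    define Ec where "Ec = char_fun f ca"
    have Ga: "G a = G 1 + (G ca oo WW)"
      unfolding G_def ca_def
      by (subst ln_shift) (simp add: fmap_add[OF lin] fmap_comp[OF lin])
    have Gad: "fps_deriv (G a) = fps_const c * uu + (fps_deriv (G ca) oo WW) * uu^2"
      unfolding Ga by (simp add: G1d comp_deriv WW_deriv)
    define S where "S = (1 + fps_X) ^ n * (Ec oo WW)"
    have Ecd: "fps_deriv Ec oo WW = (fps_deriv (G ca) oo WW) * (Ec oo WW)"
      unfolding Ec_def Ed by (simp add: comp_mult)
    have Sd: "fps_deriv S = fps_deriv (G a) * S"
    proof -
      have "fps_deriv S = fps_deriv ((1 + fps_X) ^ n) * (Ec oo WW)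
              + (1 + fps_X) ^ n * ((fps_deriv Ec oo WW) * uu^2)"
        by (simp add: S_def comp_deriv WW_deriv)
      also have "\<dots> = fps_deriv (G a) * S"
        unfolding pwd Ecd Gad S_def by (simp add: algebra_simps)
      finally show ?thesis .
    qed
    have EaS: "Ea = S"
      by (rule ode_unique[OF _ Sd]) (simp_all add: Ea_def Ed S_def E0 Ec_def fps_power_zeroth)
    define m where "m = N - n"
    have Ecpoly: "Ec = (\<Sum>j\<le>N. fps_const (Ec $ j) * fps_X ^ j)"
    proof (rule fps_ext)
      fix k
      have "(\<Sum>j\<le>N. fps_const (Ec $ j) * fps_X ^ j) $ k = (\<Sum>j\<le>N. if k = j then Ec $ j else 0)"
        unfolding fps_sum_nth by (intro sum.cong) (simp_all add: fps_X_power_nth)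
      also have "\<dots> = Ec $ k" using poly Ec_def by (auto simp: sum.delta' not_le)
      finally show "Ec $ k = (\<Sum>j\<le>N. fps_const (Ec $ j) * fps_X ^ j) $ k" by simp
    qed
    have Ecomp: "Ec oo WW = (\<Sum>j\<le>N. fps_const (Ec $ j) * WW ^ j)"
      by (subst Ecpoly) (simp add: fps_compose_sum_distrib comp_mult comp_power)
    have Q: "(1 + fps_X) ^ m * Ea = (\<Sum>j\<le>N. fps_const (Ec $ j) * (fps_X ^ j * (1 + fps_X) ^ (N - j)))"
    proof -
      have "(1 + fps_X) ^ m * Ea = (1 + fps_X) ^ N * (Ec oo WW)"
        using nN by (simp add: EaS S_def m_def mult.assoc[symmetric] power_add[symmetric])
      also have "\<dots> = (\<Sum>j\<le>N. fps_const (Ec $ j) * ((1 + fps_X) ^ N * WW ^ j))"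
        by (simp add: Ecomp sum_distrib_left ac_simps)
      also have "\<dots> = (\<Sum>j\<le>N. fps_const (Ec $ j) * (fps_X ^ j * (1 + fps_X) ^ (N - j)))"
      proof (rule sum.cong)
        fix j assume "j \<in> {..N}"
        hence eqN: "(1 + fps_X :: 'b fps) ^ N = (1 + fps_X) ^ (N - j) * (1 + fps_X) ^ j"
          by (simp add: power_add[symmetric])
        have "(1 + fps_X :: 'b fps) ^ N * WW ^ j = fps_X ^ j * (1 + fps_X) ^ (N - j) * ((1 + fps_X) * uu) ^ j"
          by (simp only: eqN WW_def power_mult_distrib mult_ac)
        thus "fps_const (Ec $ j) * ((1 + fps_X) ^ N * WW ^ j) = fps_const (Ec $ j) * (fps_X ^ j * (1 + fps_X) ^ (N - j))"
          by (simp add: uu_inv)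
      qed simp
      finally show ?thesis .
    qed
    have Qz: "((1 + fps_X) ^ m * Ea) $ K = 0" if "K > N" for K
    proof -
      have "((1 + fps_X) ^ m * Ea) $ K = (\<Sum>j\<le>N. Ec $ j * (fps_X ^ j * (1 + fps_X) ^ (N - j)) $ K)"
        unfolding Q by (simp add: fps_sum_nth)
      also have "\<dots> = 0"
        by (rule sum.neutral) (use that in \<open>auto simp: fps_X_power_mult_nth binom_nth binomial_eq_0\<close>)
      finally show ?thesis .
    qed
    show ?thesis
    proof (rule ccontr)
      assume nz: "char_fun f a $ k \<noteq> 0"
      define D where "D = {k. n < k \<and> Ea $ k \<noteq> 0}"
      have Dsub: "D \<subseteq> {..N}" using poly by (auto simp: D_def Ea_def not_le[symmetric])
      hence finD: "finite D" by (rule finite_subset) simp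
      have "k \<in> D" using nz kn by (simp add: D_def Ea_def)
      hence Dne: "D \<noteq> {}" by blast
      define d where "d = Max D"
      have dD: "d \<in> D" using Max_in[OF finD Dne] d_def by simp
      have dmax: "\<And>k. k \<in> D \<Longrightarrow> k \<le> d" using Max_ge[OF finD] d_def by simp
      have "((1 + fps_X) ^ m * Ea) $ (d + m) = (\<Sum>i=0..d+m. (if i = m then Ea $ d else 0))"
        unfolding fps_mult_nth
      proof (rule sum.cong)
        fix i assume i: "i \<in> {0..d+m}"
        show "((1 + fps_X) ^ m) $ i * Ea $ (d + m - i) = (if i = m then Ea $ d else 0)"
        proof (cases "i = m")
          case True then show ?thesis by (simp add: binom_nth)
        next
          case False
          show ?thesis
          proof (cases "i < m")
            case True
            have "d + m - i > d" using True i by auto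
            moreover have "d > n" using dD by (simp add: D_def)
            ultimately have "Ea $ (d + m - i) = 0" using dmax[of "d + m - i"] by (force simp: D_def)
            then show ?thesis using \<open>i \<noteq> m\<close> by simp
          next
            case False2: False
            then show ?thesis using \<open>i \<noteq> m\<close> by (simp add: binom_nth binomial_eq_0)
          qed
        qed
      qed simp
      also have "\<dots> = Ea $ d" by simp
      finally have "Ea $ d = ((1 + fps_X) ^ m * Ea) $ (d + m)" by simp
      also have "\<dots> = 0" using dD nN by (intro Qz) (auto simp: D_def m_def)
      finally show False using dD by (simp add: D_def)
    qed
  qed
  show ?thesis
    using nN cn E1eq part3 unfolding c_def E1_def by blast
qed

end
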